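(* For every $t\ge2$ and $\sigma\in S_t$, the pattern set $\{(\sigma,[t-2])\}$ (the vincular pattern $\sigma_1\cdots\sigma_{t-1}\text{-}\sigma_t$) admits a finite enumeration scheme of depth $t-1$ in which every reversibly deletable set $R_p$ is either $\emptyset$ or $\{1\}$.
   Context: Vincular pattern $(\sigma,X)$, $\sigma\in S_\ell$, $X\subseteq[\ell-1]$: $\pi$ contains it if some subsequence $\pi_{i_1}\cdots\pi_{i_\ell}$ ($i_1<\dots<i_\ell$) is order-isomorphic to $\sigma$ with $i_{x+1}=i_x+1$ for $x\in X$. For $p\in S_k$ and $w\in[n]^k$ with distinct letters order-isomorphic to $p$, $S_n^B(p;w)$ is the set of $B$-avoiding $\pi\in S_n$ with $\pi_i=w_i$ ($i\le k$). Spacing vector $\vec g(n,w)$: $i$-th component $c_i-c_{i-1}-1$, $c_i$ the $i$-th smallest letter of $w$, $c_0=0,c_{k+1}=n+1$. $\vec v\in\mathbb{N}^{k+1}$ is a gap vector for $p$ w.r.t. $B$ if $S_n^B(p;w)=\emptyset$ whenever $\vec g(n,w)\ge\vec v$ componentwise. $d_R$ deletes the entries in positions $R$ and reduces (for words: subtract from each remaining letter the number of deleted letters smaller than it). $R\subseteq[k]$ is reversibly deletable for $p$ w.r.t. $B$ if, for every $n$ and $w$ with $S_n^B(p;w)\ne\emptyset$, $d_R$ is a bijection $S_n^B(p;w)\to S_{n-|R|}^B(d_R(p);d_R(w))$. A child of $p\in S_k$ is any $p'\in S_{k+1}$ with $p'_1\cdots p'_k$ order-isomorphic to $p$. An enumeration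 scheme for $B$ is a set $E$ of triples $(p,G_p,R_p)$, $p$ a permutation, $G_p$ a set of gap vectors for $p$ w.r.t. $B$, $R_p$ a reversibly deletable set for $p$ w.r.t. $B$, such that: $(\epsilon,\emptyset,\emptyset)\in E$ ($\epsilon$ the empty permutation); if $(p,G_p,R_p)\in E$ with $R_p=\emptyset$ and $\vec 0\notin G_p$ then every child of $p$ occurs as the first entry of a triple in $E$; if $R_p\ne\emptyset$ then $d_{R_p}(p)$ occurs as the first entry of a triple in $E$. Its depth is the maximum length of a $p$ occurring in $E$. *)

theory Defs
  imports Main
begin

text \<open>Permutations and words are lists of natural numbers with
values in 1..n. Positions in the paper are 1-based; list indices are 0-based,
so the paper's entry in position i is the list element at index i-1.\<close>

definition perm_of :: "nat \<Rightarrow> nat list \<Rightarrow> bool" where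
  "perm_of n p \<longleftrightarrow> distinct p \<and> set p = {1..n}"

definition order_iso :: "nat list \<Rightarrow> nat list \<Rightarrow> bool" where
  "order_iso u v \<longleftrightarrow> length u = length v \<and>
     (\<forall>i<length u. \<forall>j<length u. (u!i < u!j) = (v!i < v!j))"

text \<open>A vincular pattern is a pair (sigma, X) with X a set of 1-based indices in [l-1].
pi contains it if there are indices i_1<...<i_l (here idx!0 < ... < idx!(l-1))
with pi restricted to them order-isomorphic to sigma and i_{x+1} = i_x + 1 for x in X.\<close>

definition contains :: "nat list \<Rightarrow> nat list \<times> nat set \<Rightarrow> bool" where
  "contains \<pi> pat \<longleftrightarrow> (case pat of (\<sigma>, X) \<Rightarrow>
     (\<exists>idx :: nat list. length idx = length \<sigma> \<and> sorted_wrt (<) idx \<and>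
        (\<forall>i\<in>set idx. i < length \<pi>) \<and>
        order_iso (map (\<lambda>i. \<pi>!i) idx) \<sigma> \<and>
        (\<forall>x\<in>X. 1 \<le> x \<and> x < length \<sigma> \<longrightarrow> idx!x = idx!(x-1) + 1)))"

definition avoids :: "nat list \<Rightarrow> (nat list \<times> nat set) set \<Rightarrow> bool" where
  "avoids \<pi> B \<longleftrightarrow> (\<forall>b\<in>B. \<not> contains \<pi> b)"

definition S_B :: "(nat list \<times> nat set) set \<Rightarrow> nat \<Rightarrow> nat list \<Rightarrow> nat list \<Rightarrow> nat list set" where
  "S_B B n p w = {\<pi>. perm_of n \<pi> \<and> avoids \<pi> B \<and> order_iso w p \<and> take (length p) \<pi> = w}"

definition gap_vec :: "nat \<Rightarrow> nat list \<Rightarrow> nat list" where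
  "gap_vec n w = map2 (\<lambda>a b. b - a - 1) (0 # sort w) (sort w @ [n + 1])"

definition is_gap_vector :: "(nat list \<times> nat set) set \<Rightarrow> nat list \<Rightarrow> nat list \<Rightarrow> bool" where
  "is_gap_vector B p v \<longleftrightarrow> length v = length p + 1 \<and>
     (\<forall>n w. list_all2 (\<le>) v (gap_vec n w) \<longrightarrow> S_B B n p w = {})"

text \<open>d_R: delete the entries in (1-based) positions R and reduce.\<close>

definition del_red :: "nat set \<Rightarrow> nat list \<Rightarrow> nat list" where
  "del_red R u = map (\<lambda>a. a - card {b \<in> set (nths u {i. Suc i \<in> R}). b < a})
                     (nths u {i. Suc i \<notin> R})"

definition rev_deletable :: "(nat list \<times> nat set) set \<Rightarrow> nat list \<Rightarrow> nat set \<Rightarrow> bool" where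
  "rev_deletable B p R \<longleftrightarrow> R \<subseteq> {1..length p} \<and>
     (\<forall>n w. S_B B n p w \<noteq> {} \<longrightarrow>
        bij_betw (del_red R) (S_B B n p w) (S_B B (n - card R) (del_red R p) (del_red R w)))"

definition is_child :: "nat list \<Rightarrow> nat list \<Rightarrow> bool" where
  "is_child p p' \<longleftrightarrow> perm_of (length p + 1) p' \<and> order_iso (take (length p) p') p"

definition enum_scheme ::
  "(nat list \<times> nat set) set \<Rightarrow> (nat list \<times> nat list set \<times> nat set) set \<Rightarrow> bool" where
  "enum_scheme B E \<longleftrightarrow>
     (\<forall>(p, G, R)\<in>E. perm_of (length p) p \<and> (\<forall>v\<in>G. is_gap_vector B p v) \<and> rev_deletable B p R) \<and>
     ([], {}, {}) \<in> E \<and>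
     (\<forall>(p, G, R)\<in>E. R = {} \<and> replicate (length p + 1) 0 \<notin> G \<longrightarrow>
        (\<forall>p'. is_child p p' \<longrightarrow> (\<exists>G' R'. (p', G', R') \<in> E))) \<and>
     (\<forall>(p, G, R)\<in>E. R \<noteq> {} \<longrightarrow> (\<exists>G' R'. (del_red R p, G', R') \<in> E))"

definition scheme_depth :: "(nat list \<times> nat list set \<times> nat set) set \<Rightarrow> nat" where
  "scheme_depth E = Max ((\<lambda>(p, G, R). length p) ` E)"

end

theory Submission
  imports Defs
begin

definition dn :: "nat \<Rightarrow> nat \<Rightarrow> nat" where "dn x a = (if x < a then a - 1 else a)"
definition up :: "nat \<Rightarrow> nat \<Rightarrow> nat" where "up x a = (if x \<le> a then a + 1 else a)"

definition occ :: "nat list \<Rightarrow> nat list \<Rightarrow> nat set \<Rightarrow> nat list \<Rightarrow> bool" where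
  "occ \<pi> \<sigma> X idx \<longleftrightarrow> length idx = length \<sigma> \<and> sorted_wrt (<) idx \<and>
        (\<forall>i\<in>set idx. i < length \<pi>) \<and>
        order_iso (map (\<lambda>i. \<pi>!i) idx) \<sigma> \<and>
        (\<forall>x\<in>X. 1 \<le> x \<and> x < length \<sigma> \<longrightarrow> idx!x = idx!(x-1) + 1)"

lemma contains_occ: "contains \<pi> (\<sigma>, X) = (\<exists>idx. occ \<pi> \<sigma> X idx)"
  by (simp add: contains_def occ_def)

lemma up_dn[simp]: "a \<noteq> x \<Longrightarrow> up x (dn x a) = a"
  by (auto simp: up_def dn_def)
lemma dn_up[simp]: "dn x (up x b) = b"
  by (auto simp: up_def dn_def)
lemma up_ne[simp]: "up x b \<noteq> x"
  by (auto simp: up_def)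
lemma dn_less: "a \<noteq> x \<Longrightarrow> b \<noteq> x \<Longrightarrow> (dn x a < dn x b) = (a < b)"
  by (auto simp: dn_def)
lemma up_less: "(up x a < up x b) = (a < b)"
  by (auto simp: up_def)

lemma del_red_1_Cons: "del_red {1} (x#l) = map (dn x) l"
proof -
  have a: "nths (x#l) {i. Suc i \<in> {1}} = [x]" by (simp add: nths_Cons)
  have b: "nths (x#l) {i. Suc i \<notin> {1}} = l" by (simp add: nths_Cons nths_all)
  have c: "card {b \<in> set [x]. b < a} = (if x < a then 1 else 0)" for a
  proof (cases "x < a")
    case True then have "{b \<in> set [x]. b < a} = {x}" by auto
    then show ?thesis using True by simp
  qed auto
  show ?thesis unfolding del_red_def a b c by (auto simp: dn_def)
qed

lemma del_red_1_Cons'[simp]: "del_red {Suc 0} (x#l) = map (dn x) l"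
  using del_red_1_Cons by simp

lemma del_red_empty[simp]: "del_red {} u = u"
  unfolding del_red_def by (simp add: nths_all)

lemma perm_length: "perm_of n p \<Longrightarrow> length p = n"
  unfolding perm_of_def by (metis card_atLeastAtMost diff_Suc_1 distinct_card)

lemma order_iso_map:
  assumes "\<forall>a\<in>set u. \<forall>b\<in>set u. (g a < g b) = (a < b)"
  shows "order_iso (map g u) v = order_iso u v"
  using assms unfolding order_iso_def by (auto simp: nth_mem)

lemma perm_dn:
  assumes "perm_of n (x#l)"
  shows "perm_of (n-1) (map (dn x) l)"
proof -
  have d: "distinct l" "x \<notin> set l" using assms by (auto simp: perm_of_def)
  have inj: "inj_on (dn x) (set l)"
    by (rule inj_onI) (metis d(2) up_dn)
  have s: "set l = {1..n} - {x}" "x \<in> {1..n}" using assms d by (auto simp: perm_of_def)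
  have "dn x ` ({1..n} - {x}) = {1..n-1}"
  proof
    show "dn x ` ({1..n} - {x}) \<subseteq> {1..n-1}" using s(2) by (auto simp: dn_def)
    show "{1..n-1} \<subseteq> dn x ` ({1..n} - {x})"
    proof
      fix b assume "b \<in> {1..n-1}"
      then have "up x b \<in> {1..n} - {x}" "dn x (up x b) = b" using s(2) by (auto simp: up_def dn_def)
      then show "b \<in> dn x ` ({1..n} - {x})" by (metis image_eqI)
    qed
  qed
  then show ?thesis using d inj s unfolding perm_of_def by (simp add: distinct_map)
qed

lemma perm_up:
  assumes "perm_of (n-1) l" "x \<in> {1..n}"
  shows "perm_of n (x # map (up x) l)"
proof -
  have d: "distinct l" using assms by (auto simp: perm_of_def)
  have inj: "inj_on (up x) (set l)"
    by (rule inj_onI) (metis dn_up)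
  have "up x ` {1..n-1} = {1..n} - {x}"
  proof
    show "up x ` {1..n-1} \<subseteq> {1..n} - {x}" using assms(2) by (auto simp: up_def)
    show "{1..n} - {x} \<subseteq> up x ` {1..n-1}"
    proof
      fix b assume b: "b \<in> {1..n} - {x}"
      then have "dn x b \<in> {1..n-1}" "up x (dn x b) = b" using assms(2) by (auto simp: dn_def up_def)
      then show "b \<in> up x ` {1..n-1}" by (metis image_eqI)
    qed
  qed
  then show ?thesis using d inj assms unfolding perm_of_def by (auto simp: distinct_map)
qed


lemma occ_shift:
  assumes "x \<notin> set l"
  shows "occ (map (dn x) l) \<sigma> X idx = occ (x#l) \<sigma> X (map Suc idx)"
proof -
  have A: "(\<forall>i\<in>set idx. i < length (map (dn x) l)) = (\<forall>i\<in>set (map Suc idx). i < length (x#l))"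
    by auto
  have B: "order_iso (map (\<lambda>i. map (dn x) l ! i) idx) \<sigma> = order_iso (map (\<lambda>i. (x#l) ! i) (map Suc idx)) \<sigma>"
    if "\<forall>i\<in>set idx. i < length l"
  proof -
    have e1: "map (\<lambda>i. map (dn x) l ! i) idx = map (dn x) (map (\<lambda>i. l ! i) idx)"
      using that by auto
    have e2: "map (\<lambda>i. (x#l) ! i) (map Suc idx) = map (\<lambda>i. l ! i) idx" by simp
    have e3: "order_iso (map (dn x) (map (\<lambda>i. l ! i) idx)) \<sigma> = order_iso (map (\<lambda>i. l ! i) idx) \<sigma>"
      apply (rule order_iso_map)
      using that assms by (auto intro!: dn_less simp: nth_mem)
    show ?thesis by (simp only: e1 e2 e3)
  qed
  have C: "(\<forall>y\<in>X. 1 \<le> y \<and> y < length \<sigma> \<longrightarrow> idx!y = idx!(y-1) + 1) =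
           (\<forall>y\<in>X. 1 \<le> y \<and> y < length \<sigma> \<longrightarrow> (map Suc idx)!y = (map Suc idx)!(y-1) + 1)"
    if "length idx = length \<sigma>" using that by auto
  show ?thesis unfolding occ_def using A B C by (auto simp: sorted_wrt_map)
qed

lemma no_occ_at_0:
  assumes t: "length \<sigma> = t" "t \<ge> 2" and X: "X = {1..t-2}"
    and p: "perm_of n \<pi>" "perm_of n \<pi>0" and tk: "take (t-1) \<pi> = take (t-1) \<pi>0"
    and av: "\<not> contains \<pi>0 (\<sigma>, X)"
    and o: "occ \<pi> \<sigma> X idx"
  shows "idx!0 \<noteq> 0"
proof
  assume z: "idx!0 = 0"
  have len: "length idx = t" and so: "sorted_wrt (<) idx" and bd: "\<forall>i\<in>set idx. i < length \<pi>"
    and oi: "order_iso (map (\<lambda>i. \<pi>!i) idx) \<sigma>"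
    and cons: "\<forall>y\<in>X. 1 \<le> y \<and> y < length \<sigma> \<longrightarrow> idx!y = idx!(y-1) + 1"
    using o t unfolding occ_def by auto
  have first: "idx!i = i" if "i \<le> t-2" for i
    using that
  proof (induction i)
    case 0 then show ?case using z by simp
  next
    case (Suc i)
    then have "Suc i \<in> X" "Suc i < length \<sigma>" using X t by auto
    then show ?case using cons Suc by auto
  qed
  define j where "j = idx!(t-1)"
  have jl: "j < length \<pi>"
  proof -
    have "t - 1 < length idx" using len t by simp
    then show ?thesis using bd unfolding j_def by (meson nth_mem)
  qed
  have jge: "j \<ge> t-1"
  proof -
    have "idx!(t-2) < idx!(t-1)" using so len t by (simp add: sorted_wrt_iff_nth_less)
    then show ?thesis using first[of "t-2"] t unfolding j_def by simp
  qed
  have dp: "distinct \<pi>" "distinct \<pi>0" and sp: "set \<pi> = set \<pi>0" using p by (auto simp: perm_of_def)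
  have "\<pi>!j \<in> set \<pi>0" using jl sp by (metis nth_mem)
  then obtain j' where j': "j' < length \<pi>0" "\<pi>0!j' = \<pi>!j" by (metis in_set_conv_nth)
  have same: "\<pi>!i = \<pi>0!i" if "i < t-1" for i
    using tk that by (metis nth_take)
  have lens: "length \<pi> = length \<pi>0" using p by (simp add: perm_length)
  have j'ge: "j' \<ge> t-1"
  proof (rule ccontr)
    assume "\<not> t - 1 \<le> j'"
    then have "\<pi>!j' = \<pi>!j" using same j' by simp
    moreover have "j' < length \<pi>" using j' lens by simp
    ultimately have "j' = j" using dp jl by (simp add: nth_eq_iff_index_eq)
    then show False using jge \<open>\<not> t - 1 \<le> j'\<close> by simp
  qed
  define idx' where "idx' = idx[t-1 := j']"
  have "occ \<pi>0 \<sigma> X idx'"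
    unfolding occ_def
  proof (intro conjI)
    show "length idx' = length \<sigma>" using len t idx'_def by simp
    show "sorted_wrt (<) idx'"
      unfolding sorted_wrt_iff_nth_less
    proof (intro allI impI)
      fix a b assume ab: "a < b" "b < length idx'"
      then have bt: "b < t" using len idx'_def by simp
      show "idx'!a < idx'!b"
      proof (cases "b = t-1")
        case True
        then have "a \<le> t-2" using ab t by simp
        then show ?thesis using True first[of a] j'ge ab t idx'_def len by (auto simp: nth_list_update)
      next
        case False
        then have "a \<noteq> t-1" using ab bt by simp
        then show ?thesis using False so ab idx'_def len by (simp add: sorted_wrt_iff_nth_less)
      qed
    qed
    show "\<forall>i\<in>set idx'. i < length \<pi>0"
    proof
      fix i assume "i \<in> set idx'"
      then obtain k where k: "k < length idx'" "idx'!k = i" by (metis in_set_conv_nth)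
      show "i < length \<pi>0"
      proof (cases "k = t-1")
        case True then show ?thesis using k j' idx'_def len by simp
      next
        case False then show ?thesis using k bd lens idx'_def len
          by (metis length_list_update nth_list_update_neq nth_mem)
      qed
    qed
    have "map (\<lambda>i. \<pi>0!i) idx' = map (\<lambda>i. \<pi>!i) idx"
    proof (rule nth_equalityI)
      show "length (map (\<lambda>i. \<pi>0!i) idx') = length (map (\<lambda>i. \<pi>!i) idx)" using idx'_def by simp
      fix k assume "k < length (map (\<lambda>i. \<pi>0!i) idx')"
      then have k: "k < t" using idx'_def len by simp
      show "map (\<lambda>i. \<pi>0!i) idx' ! k = map (\<lambda>i. \<pi>!i) idx ! k"
      proof (cases "k = t-1")
        case True then show ?thesis using k j' idx'_def len unfolding j_def by simp
      next
        case False
        then have "k \<le> t-2" using k by simp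
        then show ?thesis using False k idx'_def len first[of k] same[of k] t by simp
      qed
    qed
    then show "order_iso (map (\<lambda>i. \<pi>0!i) idx') \<sigma>" using oi by simp
    show "\<forall>y\<in>X. 1 \<le> y \<and> y < length \<sigma> \<longrightarrow> idx'!y = idx'!(y-1) + 1"
      using cons X t idx'_def len by auto
  qed
  then show False using av by (auto simp: contains_occ)
qed


lemma avoids_single: "avoids \<pi> {(\<sigma>, X)} = (\<not> contains \<pi> (\<sigma>, X))"
  by (simp add: avoids_def)

lemma order_iso_dn:
  assumes "order_iso (x#w) (y#p)" "distinct (x#w)" "distinct (y#p)"
  shows "order_iso (map (dn x) w) (map (dn y) p)"
proof -
  have l: "length w = length p" using assms(1) by (simp add: order_iso_def)
  have "(w!i < w!j) = (p!i < p!j)" if "i < length w" "j < length w" for i j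
    using assms(1) that unfolding order_iso_def
    by (metis Suc_less_eq length_Cons nth_Cons_Suc)
  moreover have "(dn x (w!i) < dn x (w!j)) = (w!i < w!j)" if "i < length w" "j < length w" for i j
    using assms(2) that by (metis dn_less distinct.simps(2) nth_mem)
  moreover have "(dn y (p!i) < dn y (p!j)) = (p!i < p!j)" if "i < length p" "j < length p" for i j
    using assms(3) that by (metis dn_less distinct.simps(2) nth_mem)
  ultimately show ?thesis using l unfolding order_iso_def by auto
qed

lemma rd1:
  assumes t: "length \<sigma> = t" "t \<ge> 2" and X: "X = {1..t-2}" and p: "perm_of (t-1) p"
  shows "rev_deletable {(\<sigma>,X)} p {1}"
  unfolding rev_deletable_def
proof (intro conjI allI impI)
  show "{1} \<subseteq> {1..length p}" using p t by (auto simp: perm_length)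
  fix n w
  assume ne: "S_B {(\<sigma>, X)} n p w \<noteq> {}"
  then obtain \<pi>0 where p0: "perm_of n \<pi>0" "\<not> contains \<pi>0 (\<sigma>, X)" "order_iso w p" "take (t-1) \<pi>0 = w"
    using p by (auto simp: S_B_def avoids_single perm_length)
  have lp: "length p = t - 1" using p by (simp add: perm_length)
  have lw: "length w = t - 1" using p0(3) lp by (simp add: order_iso_def)
  obtain x w' where w: "w = x # w'" using lw t by (cases w) auto
  obtain y p' where pp: "p = y # p'" using lp t by (cases p) auto
  have dw: "distinct w" using p0 by (metis distinct_take perm_of_def)
  have dp: "distinct p" using p by (simp add: perm_of_def)
  have xin: "x \<in> {1..n}" using p0 w dw
    by (metis in_set_takeD list.set_intros(1) perm_of_def)
  have lw': "length w' = t - 2" using lw w by simp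
  have tk: "take (t-1) (z#l) = z # take (t-2) l" for z l
  proof -
    have "t - 1 = Suc (t - 2)" using t by simp
    then show ?thesis by simp
  qed
  have dpw: "del_red {1} p = map (dn y) p'" "del_red {1} w = map (dn x) w'"
    using pp w by (auto simp: del_red_1_Cons)
  have oid: "order_iso (map (dn x) w') (map (dn y) p')"
    using order_iso_dn p0(3) dw dp w pp by simp
  have ldp: "length (del_red {1} p) = t - 2" using dpw pp lp by simp
  define f' where "f' = (\<lambda>\<pi>'. x # map (up x) \<pi>')"
  let ?A = "S_B {(\<sigma>, X)} n p w"
  let ?B = "S_B {(\<sigma>, X)} (n - card {1::nat}) (del_red {1} p) (del_red {1} w)"
  have inA: "\<exists>l. \<pi> = x # l \<and> take (t-2) l = w' \<and> perm_of n (x#l) \<and> \<not> contains (x#l) (\<sigma>,X)" if "\<pi> \<in> ?A" for \<pi>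
  proof -
    have "take (t-1) \<pi> = x # w'" "perm_of n \<pi>" "\<not> contains \<pi> (\<sigma>,X)"
      using that lp w by (auto simp: S_B_def avoids_single)
    then show ?thesis using tk[of _ "tl \<pi>"] by (cases \<pi>) auto
  qed
  show "bij_betw (del_red {1}) ?A ?B"
  proof (rule bij_betw_byWitness[where f'=f'])
    show "\<forall>a\<in>?A. f' (del_red {1} a) = a"
    proof
      fix a assume "a \<in> ?A"
      then obtain l where "a = x # l" "perm_of n (x#l)" using inA by blast
      then show "f' (del_red {1} a) = a" unfolding f'_def
        by (auto simp: del_red_1_Cons perm_of_def intro!: map_idI up_dn)
    qed
    show "\<forall>a\<in>?B. del_red {1} (f' a) = a"
      by (auto simp: f'_def del_red_1_Cons intro!: map_idI)
    show "del_red {1} ` ?A \<subseteq> ?B"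
    proof
      fix b assume "b \<in> del_red {1} ` ?A"
      then obtain a where a: "a \<in> ?A" "b = del_red {1} a" by blast
      then obtain l where l: "a = x # l" "take (t-2) l = w'" "perm_of n (x#l)" "\<not> contains (x#l) (\<sigma>,X)"
        using inA by blast
      have xl: "x \<notin> set l" using l(3) by (simp add: perm_of_def)
      have b: "b = map (dn x) l" using a l by (simp add: del_red_1_Cons)
      have "\<not> contains b (\<sigma>,X)"
        using l(4) occ_shift[OF xl] b by (auto simp: contains_occ)
      moreover have "perm_of (n - 1) b" using perm_dn[OF l(3)] b by simp
      moreover have "take (length (del_red {1} p)) b = del_red {1} w"
        using ldp dpw b l(2) by (simp add: take_map)
      ultimately show "b \<in> ?B" using oid dpw by (simp add: S_B_def avoids_single)
    qed
    show "f' ` ?B \<subseteq> ?A"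
    proof
      fix a assume "a \<in> f' ` ?B"
      then obtain b where b: "b \<in> ?B" "a = f' b" by blast
      have bp: "perm_of (n-1) b" "\<not> contains b (\<sigma>,X)" "take (t-2) b = map (dn x) w'"
        using b(1) ldp dpw by (auto simp: S_B_def avoids_single)
      have pa: "perm_of n a" using perm_up[OF bp(1) xin] b(2) f'_def by simp
      have xw': "x \<notin> set w'" using dw w by simp
      have ta: "take (t-1) a = w"
      proof -
        have "take (t-1) a = x # map (up x) (take (t-2) b)" using b(2) tk[of x "map (up x) b"] unfolding f'_def by (simp add: take_map)
        also have "\<dots> = x # w'" using bp(3) xw' by (auto intro!: map_idI up_dn)
        finally show ?thesis using w by simp
      qed
      have xb: "x \<notin> set (map (up x) b)" using up_ne by (auto simp del: up_ne) (metis up_ne)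
      have "\<not> contains a (\<sigma>,X)"
      proof
        assume "contains a (\<sigma>,X)"
        then obtain idx where o: "occ a \<sigma> X idx" by (auto simp: contains_occ)
        have i0: "idx!0 \<noteq> 0"
          using no_occ_at_0[OF t X pa p0(1) _ p0(2) o] ta p0(4) by simp
        have so: "sorted_wrt (<) idx" and li: "length idx = t" using o t by (auto simp: occ_def)
        have ge: "\<forall>i\<in>set idx. i \<ge> 1"
        proof
          fix i assume "i \<in> set idx"
          then obtain k where k: "k < length idx" "idx!k = i" by (metis in_set_conv_nth)
          show "i \<ge> 1"
          proof (cases "k = 0")
            case True then show ?thesis using k i0 by simp
          next
            case False then have "idx!0 < idx!k" using so k by (metis sorted_wrt_iff_nth_less bot_nat_0.not_eq_extremum)
            then show ?thesis using k by simp
          qed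
        qed
        have "idx = map Suc (map (\<lambda>i. i - 1) idx)" using ge by (induction idx) auto
        then have "occ (x # map (up x) b) \<sigma> X (map Suc (map (\<lambda>i. i - 1) idx))"
          using o b(2) f'_def by simp
        then have "occ (map (dn x) (map (up x) b)) \<sigma> X (map (\<lambda>i. i - 1) idx)"
          using occ_shift[OF xb] by simp
        then show False using bp(2) by (simp add: contains_occ comp_def)
      qed
      then show "a \<in> ?A" using pa ta lp p0(3) by (simp add: S_B_def avoids_single)
    qed
  qed
qed


lemma rd0: "rev_deletable B p {}"
proof -
  have "del_red {} = id" by (rule ext) simp
  then show ?thesis unfolding rev_deletable_def by (simp add: bij_betw_id)
qed

theorem mainTheorem7:
  fixes t :: nat and \<sigma> :: "nat list"
  assumes "t \<ge> 2" and "perm_of t \<sigma>"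
  shows "\<exists>E. finite E \<and> (\<forall>(p, G, R)\<in>E. finite G) \<and>
           enum_scheme {(\<sigma>, {1..t-2})} E \<and> scheme_depth E = t - 1 \<and>
           (\<forall>(p, G, R)\<in>E. R = {} \<or> R = {1})"
proof -
  define P where "P = {p. perm_of (length p) p \<and> length p \<le> t-1}"
  define E where "E = (\<lambda>p. (p, {}::nat list set, if length p = t-1 then {1::nat} else {})) ` P"
  have ls: "length \<sigma> = t" using assms(2) by (simp add: perm_length)
  have finP: "finite P"
  proof (rule finite_subset)
    show "P \<subseteq> {p. set p \<subseteq> {1..t-1} \<and> length p \<le> t-1}"
      unfolding P_def perm_of_def by auto
    show "finite {p. set p \<subseteq> {1..t-1} \<and> length p \<le> t-1}"
      by (rule finite_lists_length_le) simp
  qed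
  have fin: "finite E" unfolding E_def using finP by simp
  have triples: "\<forall>(p, G, R)\<in>E. perm_of (length p) p \<and> (\<forall>v\<in>G. is_gap_vector {(\<sigma>, {1..t-2})} p v)
                    \<and> rev_deletable {(\<sigma>, {1..t-2})} p R"
    unfolding E_def P_def using rd1[OF ls assms(1) refl] rd0 by auto
  have emp: "([], {}, {}) \<in> E"
  proof -
    have "[] \<in> P" unfolding P_def perm_of_def by simp
    then show ?thesis unfolding E_def using assms(1) by force
  qed
  have ch: "\<exists>G' R'. (p', G', R') \<in> E" if "p \<in> P" "length p \<noteq> t-1" "is_child p p'" for p p'
  proof -
    have "length p \<le> t-1" using that unfolding P_def by auto
    moreover have pp: "perm_of (length p + 1) p'" using that by (simp add: is_child_def)
    moreover from pp have "length p' = length p + 1" by (simp add: perm_length)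
    ultimately have "p' \<in> P" using that unfolding P_def by auto
    then show ?thesis unfolding E_def by blast
  qed
  have child: "\<forall>(p, G, R)\<in>E. R = {} \<and> replicate (length p + 1) 0 \<notin> G \<longrightarrow>
        (\<forall>p'. is_child p p' \<longrightarrow> (\<exists>G' R'. (p', G', R') \<in> E))"
    using ch unfolding E_def by auto
  have dl: "\<exists>G' R'. (del_red {1} p, G', R') \<in> E" if "p \<in> P" "length p = t-1" for p
  proof -
    have lp: "length p = t-1" and pp: "perm_of (length p) p" using that unfolding P_def by auto
    obtain y p' where yp: "p = y # p'" using lp assms(1) by (cases p) auto
    have "perm_of (t-2) (map (dn y) p')" using perm_dn[of "t-1" y p'] pp lp yp by (simp add: numeral_2_eq_2)
    moreover have "length (map (dn y) p') = t - 2" using lp yp by simp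
    ultimately have "del_red {1} p \<in> P" using yp unfolding P_def by (simp add: del_red_1_Cons)
    then show ?thesis unfolding E_def by blast
  qed
  have del: "\<forall>(p, G, R)\<in>E. R \<noteq> {} \<longrightarrow> (\<exists>G' R'. (del_red R p, G', R') \<in> E)"
    using dl unfolding E_def by auto
  have depth: "scheme_depth E = t - 1"
    unfolding scheme_depth_def
  proof (rule Max_eqI)
    show "finite ((\<lambda>(p, G, R). length p) ` E)" using fin by simp
    show "y \<le> t - 1" if "y \<in> (\<lambda>(p, G, R). length p) ` E" for y
      using that unfolding E_def P_def by auto
    have "[1..<t] \<in> P" unfolding P_def perm_of_def using assms(1) by auto
    then show "t - 1 \<in> (\<lambda>(p, G, R). length p) ` E" unfolding E_def by force
  qed
  have "\<forall>(p, G, R)\<in>E. finite G" unfolding E_def by auto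
  moreover have "\<forall>(p, G, R)\<in>E. R = {} \<or> R = {1}" unfolding E_def by auto
  ultimately show ?thesis using fin triples emp child del depth unfolding enum_scheme_def by blast
qed

end
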